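(* Let $0<\eta<\frac{\pi}{2}$ and let $\gamma$ be an open arc in $\mathbb{T}=\partial\Delta$ such that $e^{i\theta}\in\gamma$ for all $\theta\in(-2\eta,2\eta)$. Then there exists a constant $1<C<\infty$ with the following property: if $u$ is a subharmonic function on $\Delta$ with $u\le 1$ on $\Delta$ and $\hat u\le 0$ on $B$, where $B$ is a measurable subset of $\gamma$ with $\frac{\operatorname{mes}(B)}{\operatorname{mes}(\gamma)}\ge 1-\frac{1}{N}$ for some $N>1$, then $$\sup_{\rho=1-\frac{1}{\sqrt N},\ |\zeta|<\eta} u(\rho e^{i\zeta})\le \frac{C}{\sqrt N}.$$
   Context: $\Delta$ is the open unit disc in $\mathbb{C}$, $\mathbb{T}=\partial\Delta$, and $\operatorname{mes}$ denotes arc-length measure on $\mathbb{T}$. For $\zeta\in\mathbb{T}$ and $\alpha>1$ let $\mathcal{A}_\alpha(\zeta)=\{w\in\Delta:|w-\zeta|<\alpha\operatorname{dist}(w,T_\zeta)\}$ where $T_\zeta$ is the tangent line to $\mathbb{T}$ at $\zeta$; for $\zeta\in\mathbb{T}$, $\hat u(\zeta)=\sup_{\alpha>1}\limsup_{w\in\mathcal{A}_\alpha(\zeta),\,w\to\zeta}u(w)$. *)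

theory Defs
  imports "HOL-Analysis.Analysis" "HOL-Library.Liminf_Limsup"
begin

definition unit_disc :: "complex set" where
  "unit_disc = ball 0 1"

text \<open>Subharmonic functions on the unit disc, with values in [-infinity, infinity):
  upper semicontinuous, and satisfying the harmonic-majorant property on every closed
  disc contained in the unit disc (a function harmonic on an open disc is the real part of
  a holomorphic function there).\<close>
definition subharmonic_on_disc :: "(complex \<Rightarrow> ereal) \<Rightarrow> bool" where
  "subharmonic_on_disc u \<longleftrightarrow>
     (\<forall>z\<in>unit_disc. u z < \<infinity>) \<and>
     (\<forall>z\<in>unit_disc. Limsup (at z within unit_disc) u \<le> u z) \<and>
     (\<forall>a r f. r > 0 \<longrightarrow> cball a r \<subseteq> unit_disc \<longrightarrow>
        continuous_on (cball a r) f \<longrightarrow> f holomorphic_on ball a r \<longrightarrow>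
        (\<forall>w\<in>sphere a r. u w \<le> ereal (Re (f w))) \<longrightarrow>
        (\<forall>w\<in>cball a r. u w \<le> ereal (Re (f w))))"

definition tangent_line :: "complex \<Rightarrow> complex set" where
  "tangent_line \<zeta> = {\<zeta> + complex_of_real t * \<i> * \<zeta> | t. True}"

definition approach_region :: "complex \<Rightarrow> real \<Rightarrow> complex set" where
  "approach_region \<zeta> \<alpha> =
     {w \<in> unit_disc. cmod (w - \<zeta>) < \<alpha> * infdist w (tangent_line \<zeta>)}"

definition nt_upper :: "(complex \<Rightarrow> ereal) \<Rightarrow> complex \<Rightarrow> ereal" where
  "nt_upper u \<zeta> = (SUP \<alpha>\<in>{1<..}. Limsup (at \<zeta> within approach_region \<zeta> \<alpha>) u)"

definition circle_param :: "complex set \<Rightarrow> real set" where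
  "circle_param B = {t \<in> {-pi<..pi}. cis t \<in> B}"

definition circle_measurable :: "complex set \<Rightarrow> bool" where
  "circle_measurable B \<longleftrightarrow> circle_param B \<in> sets lebesgue"

definition mes :: "complex set \<Rightarrow> real" where
  "mes B = measure lebesgue (circle_param B)"

definition open_arc :: "complex set \<Rightarrow> bool" where
  "open_arc \<gamma> \<longleftrightarrow> (\<exists>a b. a < b \<and> b \<le> a + 2 * pi \<and> \<gamma> = cis ` {a<..<b})"

end

theory Submission
  imports Defs
begin

lemma sq_aux: "(a*cx - b*cy)\<^sup>2 + (a * sx - b * sy)\<^sup>2 = a\<^sup>2*(cx\<^sup>2+sx\<^sup>2) + b\<^sup>2*(cy\<^sup>2+sy\<^sup>2) - 2*a*b*(cx*cy + sx * sy)"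
  for a b cx cy sx sy :: real
  by algebra

lemma cmod_rcis_diff_sq:
  "(cmod (complex_of_real a * cis t - complex_of_real b * cis p))\<^sup>2 = a\<^sup>2 + b\<^sup>2 - 2*a*b*cos (t - p)"
proof -
  have "(cmod (complex_of_real a * cis t - complex_of_real b * cis p))\<^sup>2
     = (a * cos t - b * cos p)\<^sup>2 + (a * sin t - b * sin p)\<^sup>2"
    by (simp add: cmod_power2)
  also have "\<dots> = a\<^sup>2 * ((cos t)\<^sup>2 + (sin t)\<^sup>2) + b\<^sup>2 * ((cos p)\<^sup>2 + (sin p)\<^sup>2) - 2*a*b*(cos t * cos p + sin t * sin p)"
    by (rule sq_aux)
  also have "\<dots> = a\<^sup>2 + b\<^sup>2 - 2*a*b*cos (t - p)"
    by (simp only: cos_diff sin_cos_squared_add2 mult_1_right)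
  finally show ?thesis .
qed

lemma cmod_cis_diff_le: "cmod (cis a - cis b) \<le> \<bar>a - b\<bar>"
proof -
  have "(cmod (cis a - cis b))\<^sup>2 = 2 - 2 * cos (a - b)"
    using cmod_rcis_diff_sq[of 1 a 1 b] by simp
  also have "\<dots> = 4 * (sin ((a-b)/2))\<^sup>2"
  proof -
    have "2 * ((a - b) / 2) = a - b" by simp
    moreover have "cos (2*((a-b)/2)) = 1 - 2 * (sin ((a-b)/2))\<^sup>2" by (rule cos_double_sin)
    ultimately have "cos (a - b) = 1 - 2 * (sin ((a-b)/2))\<^sup>2" by (simp only:)
    then show ?thesis by simp
  qed
  also have "\<dots> \<le> 4 * ((a-b)/2)\<^sup>2"
  proof -
    have "(sin ((a-b)/2))\<^sup>2 \<le> ((a-b)/2)\<^sup>2"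
      using abs_sin_x_le_abs_x[of "(a-b)/2"] by (simp only: abs_le_square_iff)
    then show ?thesis by simp
  qed
  also have "\<dots> = \<bar>a - b\<bar>\<^sup>2" by (simp add: power_divide)
  finally show ?thesis by (rule power2_le_imp_le) simp
qed

lemma Re_poisson:
  assumes "p \<noteq> z"
  shows "Re ((p + z) / (p - z)) = ((cmod p)\<^sup>2 - (cmod z)\<^sup>2) / (cmod (p - z))\<^sup>2"
proof -
  show ?thesis
  proof -
    have n: "Re (p + z) * Re (p - z) + Im (p + z) * Im (p - z) = (cmod p)\<^sup>2 - (cmod z)\<^sup>2"
      unfolding cmod_power2 by (simp add: power2_eq_square algebra_simps)
    have d: "(Re (p - z))\<^sup>2 + (Im (p - z))\<^sup>2 = (cmod (p - z))\<^sup>2"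
      unfolding cmod_power2 by simp
    show ?thesis unfolding Re_divide n d[symmetric] ..
  qed
qed

lemma cos_le_far:
  fixes x e :: real
  assumes "0 < e" "e \<le> pi" "e \<le> \<bar>x\<bar>" "\<bar>x\<bar> \<le> 2*pi - e"
  shows "cos x \<le> cos e"
proof (cases "\<bar>x\<bar> \<le> pi")
  case True
  then show ?thesis using assms cos_monotone_0_pi_le[of e "\<bar>x\<bar>"] by simp
next
  case False
  have "cos x = cos (2*pi - \<bar>x\<bar>)"
    by (metis cos_abs_real cos_2pi_minus)
  also have "\<dots> \<le> cos e" using assms False cos_monotone_0_pi_le[of e "2*pi - \<bar>x\<bar>"] by simp
  finally show ?thesis .
qed

lemma arc_meas:
  assumes "open_arc \<gamma>"
  shows "circle_param \<gamma> \<in> sets lebesgue"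
proof -
  obtain a b where ab: "a < b" "b \<le> a + 2*pi" "\<gamma> = cis ` {a<..<b}"
    using assms unfolding open_arc_def by blast
  have eq: "circle_param \<gamma> = {-pi<..pi} \<inter> (\<Union>n::int. {a + 2*pi*n<..<b + 2*pi*n})"
  proof (intro set_eqI iffI)
    fix t assume "t \<in> circle_param \<gamma>"
    then have t: "t \<in> {-pi<..pi}" and "cis t \<in> cis ` {a<..<b}"
      using ab by (auto simp: circle_param_def)
    then obtain x where x: "x \<in> {a<..<b}" "cis t = cis x" by auto
    then have "sin t = sin x \<and> cos t = cos x" by (metis cis.sel)
    then obtain n::int where "t = x + 2*pi*n" using sin_cos_eq_iff by blast
    then have "t \<in> {a + 2*pi*n<..<b + 2*pi*n}" using x by auto
    with t show "t \<in> {-pi<..pi} \<inter> (\<Union>n::int. {a + 2*pi*n<..<b + 2*pi*n})" by blast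
  next
    fix t assume "t \<in> {-pi<..pi} \<inter> (\<Union>n::int. {a + 2*pi*n<..<b + 2*pi*n})"
    then obtain n::int where t: "t \<in> {-pi<..pi}" "a + 2*pi*n < t" "t < b + 2*pi*n" by auto
    have "sin t = sin (t - 2*pi*n) \<and> cos t = cos (t - 2*pi*n)"
      using sin_cos_eq_iff[of t "t - 2*pi*n"] by auto
    then have "cis t = cis (t - 2*pi*n)" by (simp add: complex_eq_iff)
    moreover have "t - 2*pi*n \<in> {a<..<b}" using t by auto
    ultimately show "t \<in> circle_param \<gamma>" using t ab by (auto simp: circle_param_def)
  qed
  have "open (\<Union>n::int. {a + 2*pi*n<..<b + 2*pi*n})" by (intro open_UN) auto
  then show ?thesis unfolding eq by (intro sets.Int) auto
qed

lemma G_closed: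
  fixes u :: "complex \<Rightarrow> ereal"
  shows "closed {\<theta>::real. \<forall>r \<tau>. 1 - h < r \<and> r < 1 \<and> \<bar>\<tau> - \<theta>\<bar> < 1 - r \<longrightarrow> u (complex_of_real r * cis \<tau>) < e}"
proof -
  let ?S = "{\<theta>::real. \<forall>r \<tau>. 1 - h < r \<and> r < 1 \<and> \<bar>\<tau> - \<theta>\<bar> < 1 - r \<longrightarrow> u (complex_of_real r * cis \<tau>) < e}"
  let ?W = "{(r, \<tau>). 1 - h < r \<and> r < 1 \<and> \<not> u (complex_of_real r * cis \<tau>) < e}"
  have "- ?S = (\<Union>p\<in>?W. ball (snd p) (1 - fst p))"
    by (auto simp: dist_real_def)
  moreover have "open (\<Union>p\<in>?W. ball (snd p) (1 - fst p))" by (intro open_UN) auto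
  ultimately show ?thesis by (simp add: closed_def)
qed

lemma cone_in_region:
  assumes "0 < r" "r < 1" "\<bar>\<tau> - \<theta>\<bar> < 1 - r"
  defines "w \<equiv> complex_of_real r * cis \<tau>"
  shows "w \<in> approach_region (cis \<theta>) 3" "w \<noteq> cis \<theta>" "cmod (w - cis \<theta>) < 2 * (1 - r)"
proof -
  have nw: "cmod w = r" using assms by (simp add: w_def norm_mult)
  have tri: "cmod (w - cis \<theta>) \<le> cmod (w - cis \<tau>) + cmod (cis \<tau> - cis \<theta>)"
    using norm_triangle_ineq[of "w - cis \<tau>" "cis \<tau> - cis \<theta>"] by simp
  have e1: "cmod (w - cis \<tau>) = 1 - r"
  proof -
    have "w - cis \<tau> = complex_of_real (r - 1) * cis \<tau>" by (simp add: w_def algebra_simps)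
    then show ?thesis using assms by (simp only: norm_mult norm_of_real norm_cis) simp
  qed
  have e2: "cmod (cis \<tau> - cis \<theta>) \<le> \<bar>\<tau> - \<theta>\<bar>" by (rule cmod_cis_diff_le)
  from tri e1 e2 show d: "cmod (w - cis \<theta>) < 2 * (1 - r)" using assms(1-3) by (smt (verit))
  show "w \<noteq> cis \<theta>" using nw assms(1-3) by auto
  have T: "tangent_line (cis \<theta>) \<noteq> {}" unfolding tangent_line_def by auto
  have "1 - r \<le> infdist w (tangent_line (cis \<theta>))"
    unfolding infdist_notempty[OF T]
  proof (rule cINF_greatest[OF T])
    fix y assume "y \<in> tangent_line (cis \<theta>)"
    then obtain t where y: "y = cis \<theta> + complex_of_real t * \<i> * cis \<theta>"
      unfolding tangent_line_def by auto
    have c1: "cnj (cis \<theta>) * cis \<theta> = 1" by (simp add: cis_cnj cis_mult)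
    have c2: "cnj (cis \<theta>) * cis \<tau> = cis (\<tau> - \<theta>)" by (simp add: cis_cnj cis_mult)
    have "cnj (cis \<theta>) * (w - y) = complex_of_real r * (cnj (cis \<theta>) * cis \<tau>) - (cnj (cis \<theta>) * cis \<theta>) * (1 + complex_of_real t * \<i>)"
      unfolding y w_def by algebra
    also have "\<dots> = complex_of_real r * cis (\<tau> - \<theta>) - (1 + complex_of_real t * \<i>)"
      unfolding c1 c2 by simp
    finally have "cnj (cis \<theta>) * (w - y) = complex_of_real r * cis (\<tau> - \<theta>) - (1 + complex_of_real t * \<i>)" .
    then have "Re (cnj (cis \<theta>) * (w - y)) = r * cos (\<tau> - \<theta>) - 1" by simp
    moreover have "r * cos (\<tau> - \<theta>) \<le> r" using assms(1) by simp
    moreover have "\<bar>Re (cnj (cis \<theta>) * (w - y))\<bar> \<le> cmod (cnj (cis \<theta>) * (w - y))"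
      by (rule abs_Re_le_cmod)
    moreover have "cmod (cnj (cis \<theta>) * (w - y)) = dist w y"
      by (simp add: norm_mult dist_norm)
    ultimately show "1 - r \<le> dist w y" by linarith
  qed
  then show "w \<in> approach_region (cis \<theta>) 3"
    using d nw assms(1-3) unfolding approach_region_def unit_disc_def by auto
qed

lemma nt_in_G:
  fixes u :: "complex \<Rightarrow> ereal"
  assumes "nt_upper u (cis \<theta>) \<le> 0" "0 < e"
  shows "\<exists>n::nat. \<forall>r \<tau>. 1 - 1/(real n + 1) < r \<and> r < 1 \<and> \<bar>\<tau> - \<theta>\<bar> < 1 - r \<longrightarrow> u (complex_of_real r * cis \<tau>) < ereal e"
proof -
  have "\<forall>\<alpha>\<in>{1<..}. Limsup (at (cis \<theta>) within approach_region (cis \<theta>) \<alpha>) u \<le> 0"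
    using assms(1) unfolding nt_upper_def by (simp add: SUP_le_iff)
  then have "Limsup (at (cis \<theta>) within approach_region (cis \<theta>) 3) u \<le> 0" by simp
  also have "0 < ereal e" using assms(2) by simp
  finally have "eventually (\<lambda>x. u x < ereal e) (at (cis \<theta>) within approach_region (cis \<theta>) 3)"
    by (rule Limsup_lessD)
  then obtain d where d: "d > 0" "\<forall>x\<in>approach_region (cis \<theta>) 3. x \<noteq> cis \<theta> \<and> dist x (cis \<theta>) < d \<longrightarrow> u x < ereal e"
    unfolding eventually_at by blast
  obtain n::nat where n: "inverse (real (Suc n)) < d/2" using reals_Archimedean[of "d/2"] d by auto
  have n': "1/(real n + 1) < d/2" using n by (simp add: field_simps)
  have n1: "1/(real n + 1) \<le> 1" by (simp add: field_simps)
  show ?thesis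
  proof (intro exI allI impI)
    fix r \<tau> assume h: "1 - 1/(real n + 1) < r \<and> r < 1 \<and> \<bar>\<tau> - \<theta>\<bar> < 1 - r"
    then have r0: "0 < r" using n1 by linarith
    from cone_in_region[OF r0 _ _, of \<tau> \<theta>] h
    have w: "complex_of_real r * cis \<tau> \<in> approach_region (cis \<theta>) 3"
      "complex_of_real r * cis \<tau> \<noteq> cis \<theta>" "cmod (complex_of_real r * cis \<tau> - cis \<theta>) < 2 * (1 - r)"
      by auto
    have "dist (complex_of_real r * cis \<tau>) (cis \<theta>) < d"
      using w(3) h n' by (simp add: dist_norm)
    then show "u (complex_of_real r * cis \<tau>) < ereal e" using d w by blast
  qed
qed

theorem mainTheorem2:
  fixes \<eta> :: real and \<gamma> :: "complex set"
  assumes "0 < \<eta>" and "\<eta> < pi / 2"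
    and "open_arc \<gamma>"
    and "\<forall>\<theta>\<in>{-2*\<eta><..<2*\<eta>}. cis \<theta> \<in> \<gamma>"
  shows "\<exists>C::real. 1 < C \<and>
    (\<forall>u B N. subharmonic_on_disc u \<longrightarrow> (\<forall>z\<in>unit_disc. u z \<le> 1) \<longrightarrow>
       B \<subseteq> \<gamma> \<longrightarrow> circle_measurable B \<longrightarrow> (1::real) < N \<longrightarrow>
       mes B / mes \<gamma> \<ge> 1 - 1 / N \<longrightarrow>
       (\<forall>\<zeta>\<in>B. nt_upper u \<zeta> \<le> 0) \<longrightarrow>
       (\<forall>\<zeta>::real. \<bar>\<zeta>\<bar> < \<eta> \<longrightarrow>
          u (complex_of_real (1 - 1 / sqrt N) * cis \<zeta>) \<le> ereal (C / sqrt N)))"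
proof -
  define c\<eta> where "c\<eta> = 1 - cos \<eta>"
  have c\<eta>: "0 < c\<eta>"
    using cos_monotone_0_pi[of 0 \<eta>] assms(1,2) by (simp add: c\<eta>_def)
  define C where "C = 200 + 100 / c\<eta>"
  have C2: "2 \<le> C" using c\<eta> by (simp add: C_def)
  have Gm: "circle_param \<gamma> \<in> sets lebesgue" by (rule arc_meas) (fact assms(3))
  have Gsub: "circle_param \<gamma> \<subseteq> {-pi<..pi}" by (auto simp: circle_param_def)
  have Ifm: "{-pi<..pi} \<in> fmeasurable lebesgue"
    by (rule bounded_set_imp_lmeasurable) auto
  have Gfm: "circle_param \<gamma> \<in> fmeasurable lebesgue"
    by (rule fmeasurableI2[OF Ifm Gsub Gm])
  have mes\<gamma>: "mes \<gamma> \<le> 2*pi"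
    unfolding mes_def using measure_mono_fmeasurable[OF Gsub Gm Ifm] by simp
  have arc_in: "{-2*\<eta><..<2*\<eta>} \<subseteq> circle_param \<gamma>"
    using assms(2,4) by (auto simp: circle_param_def)
  show ?thesis
  proof (intro exI[of _ C] conjI allI impI)
    show "1 < C" using C2 by simp
  next
    fix u B N \<phi>
    assume sh: "subharmonic_on_disc u" and ule: "\<forall>z\<in>unit_disc. u z \<le> 1"
      and Bsub: "B \<subseteq> \<gamma>" and Bm: "circle_measurable B" and N1: "1 < N"
      and ratio: "1 - 1 / N \<le> mes B / mes \<gamma>" and ntB: "\<forall>\<zeta>\<in>B. nt_upper u \<zeta> \<le> 0"
      and \<phi>: "\<bar>\<phi>\<bar> < \<eta>"
    define s where "s = 1 / sqrt N"
    have sqN: "1 < sqrt N" using N1 by simp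
    have s0: "0 < s" "s < 1" using sqN by (auto simp: s_def)
    have s2: "s\<^sup>2 = 1 / N" using N1 by (simp add: s_def power_divide)
    have Cs: "C / sqrt N = C * s" by (simp add: s_def)
    define z0 where "z0 = complex_of_real (1 - s) * cis \<phi>"
    have nz0: "cmod z0 = 1 - s" using s0 by (simp only: z0_def norm_mult norm_of_real norm_cis) simp
    have z0disc: "z0 \<in> unit_disc" using nz0 s0 by (simp add: unit_disc_def)
    have "u z0 \<le> ereal (C * s)"
    proof (cases "1/2 \<le> s")
      case True
      have "u z0 \<le> 1" using ule z0disc by blast
      also have "1 \<le> ereal (C * s)"
      proof -
        have "1 \<le> C * s" using C2 True mult_mono[of 2 C "1/2" s] by simp
        then show ?thesis by simp
      qed
      finally show ?thesis .
    next
      case False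
      then have sh2: "s < 1/2" by simp
      define Bt where "Bt = circle_param B"
      have Btm: "Bt \<in> sets lebesgue" using Bm by (simp add: Bt_def circle_measurable_def)
      have Bt_sub: "Bt \<subseteq> circle_param \<gamma>" using Bsub by (auto simp: Bt_def circle_param_def)
      have Btfm: "Bt \<in> fmeasurable lebesgue" by (rule fmeasurableI2[OF Gfm Bt_sub Btm])
      define G where "G = (\<lambda>h. {\<theta>::real. \<forall>r \<tau>. 1 - h < r \<and> r < 1 \<and> \<bar>\<tau> - \<theta>\<bar> < 1 - r \<longrightarrow> u (complex_of_real r * cis \<tau>) < ereal s})"
      have Gc: "closed (G h)" for h unfolding G_def by (rule G_closed)
      have Gmeas: "G h \<in> sets lebesgue" for h using Gc[of h] by auto
      have Gmono: "G h2 \<subseteq> G h1" if "h1 \<le> h2" for h1 h2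
      proof
        fix \<theta> assume th: "\<theta> \<in> G h2"
        show "\<theta> \<in> G h1" unfolding G_def
        proof (intro CollectI allI impI)
          fix r \<tau> assume h: "1 - h1 < r \<and> r < 1 \<and> \<bar>\<tau> - \<theta>\<bar> < 1 - r"
          then have "1 - h2 < r \<and> r < 1 \<and> \<bar>\<tau> - \<theta>\<bar> < 1 - r" using that by linarith
          moreover from th have "\<forall>r \<tau>. 1 - h2 < r \<and> r < 1 \<and> \<bar>\<tau> - \<theta>\<bar> < 1 - r \<longrightarrow> u (complex_of_real r * cis \<tau>) < ereal s"
            unfolding G_def mem_Collect_eq .
          ultimately show "u (complex_of_real r * cis \<tau>) < ereal s" by blast
        qed
      qed
      define A where "A = (\<lambda>n::nat. Bt \<inter> G (1/(real n + 1)))"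
      have Ameas: "range A \<subseteq> sets lebesgue" using Btm Gmeas by (auto simp: A_def)
      have Ainc: "incseq A"
      proof (rule incseq_SucI)
        fix n
        have "1/(real (Suc n) + 1) \<le> 1/(real n + 1)" by (rule divide_left_mono) auto
        then show "A n \<subseteq> A (Suc n)" using Gmono unfolding A_def by blast
      qed
      have Aun: "(\<Union>n. A n) = Bt"
      proof
        show "(\<Union>n. A n) \<subseteq> Bt" by (auto simp: A_def)
      next
        show "Bt \<subseteq> (\<Union>n. A n)"
        proof
          fix \<theta> assume "\<theta> \<in> Bt"
          then have "cis \<theta> \<in> B" by (simp add: Bt_def circle_param_def)
          then have "nt_upper u (cis \<theta>) \<le> 0" using ntB by blast
          from nt_in_G[OF this s0(1)] obtain n::nat where
            "\<forall>r \<tau>. 1 - 1/(real n + 1) < r \<and> r < 1 \<and> \<bar>\<tau> - \<theta>\<bar> < 1 - r \<longrightarrow> u (complex_of_real r * cis \<tau>) < ereal s"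
            by blast
          then have "\<theta> \<in> G (1/(real n + 1))" by (simp add: G_def)
          with \<open>\<theta> \<in> Bt\<close> show "\<theta> \<in> (\<Union>n. A n)" by (auto simp: A_def)
        qed
      qed
      have Btfin: "emeasure lebesgue (\<Union>n. A n) \<noteq> \<infinity>"
        using fmeasurableD2[OF Btfm] unfolding Aun infinity_ennreal_def .
      have lim: "(\<lambda>n. measure lebesgue (A n)) \<longlonglongrightarrow> measure lebesgue Bt"
        using Lim_measure_incseq[OF Ameas Ainc Btfin] unfolding Aun .
      have "measure lebesgue Bt - s\<^sup>2 < measure lebesgue Bt" using s0 by simp
      from order_tendstoD(1)[OF lim this] obtain n0 where
        n0: "measure lebesgue Bt - s\<^sup>2 < measure lebesgue (A n0)"
        unfolding eventually_sequentially by blast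
      define h0 where "h0 = 1/(real n0 + 1)"
      have h0: "0 < h0" by (simp add: h0_def)
      have BG: "measure lebesgue (Bt - G h0) < s\<^sup>2"
      proof -
        have "Bt - G h0 = Bt - A n0" by (auto simp: A_def h0_def)
        moreover have "measure lebesgue (Bt - A n0) = measure lebesgue Bt - measure lebesgue (A n0)"
          by (rule measure_Diff) (use fmeasurableD2[OF Btfm] Btm Ameas in \<open>auto simp: A_def\<close>)
        ultimately show ?thesis using n0 by simp
      qed
      define m where "m = min (h0/2) (min (s\<^sup>2/2) (pi/2 - \<eta>))"
      have s2b: "s\<^sup>2 < 1/4"
      proof -
        have "s\<^sup>2 < (1/2)\<^sup>2" using s0 sh2 by (intro power_strict_mono) auto
        then show ?thesis by (simp add: power2_eq_square)
      qed
      have m0: "0 < m" using h0 s0 assms(2) by (simp add: m_def)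
      have mh: "m \<le> h0/2" unfolding m_def by (rule min.cobounded1)
      have ms: "m \<le> s\<^sup>2/2" unfolding m_def by (rule min.coboundedI2[OF min.cobounded1])
      have me: "m \<le> pi/2 - \<eta>" unfolding m_def by (rule min.coboundedI2[OF min.cobounded2])
      have m8: "m \<le> 1/8" using ms s2b by linarith
      have ms': "m \<le> s/4"
      proof -
        have "s\<^sup>2 \<le> s * (1/2)" using s0 sh2 by (simp add: power2_eq_square)
        then show ?thesis using ms by linarith
      qed
      define \<delta> where "\<delta> = m/2"
      have \<delta>0: "0 < \<delta>" using m0 by (simp add: \<delta>_def)
      define R where "R = 1 - m"
      define R' where "R' = 1 - 3*m/4"
      define idx where "idx = (\<lambda>\<tau>::real. \<lfloor>(\<tau> + pi)/\<delta> + 1/2\<rfloor>)"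
      define tj where "tj = (\<lambda>j::int. -pi + of_int j * \<delta>)"
      have cell_iff: "idx \<tau> = j \<longleftrightarrow> tj j - \<delta>/2 \<le> \<tau> \<and> \<tau> < tj j + \<delta>/2" for \<tau> j
      proof -
        have "idx \<tau> = j \<longleftrightarrow> of_int j \<le> (\<tau> + pi)/\<delta> + 1/2 \<and> (\<tau> + pi)/\<delta> + 1/2 < of_int j + 1"
          unfolding idx_def by (rule floor_eq_iff)
        also have "\<dots> \<longleftrightarrow> tj j - \<delta>/2 \<le> \<tau> \<and> \<tau> < tj j + \<delta>/2"
          using \<delta>0 by (simp add: tj_def field_simps)
        finally show ?thesis .
      qed
      have cell: "\<bar>tj (idx \<tau>) - \<tau>\<bar> \<le> \<delta>/2" for \<tau>
      proof -
        have "tj (idx \<tau>) - \<delta>/2 \<le> \<tau> \<and> \<tau> < tj (idx \<tau>) + \<delta>/2" using cell_iff by blast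
        then show ?thesis unfolding abs_le_iff by linarith
      qed
      define K where "K = {\<tau> \<in> {-pi<..pi}. \<not> u (complex_of_real R * cis \<tau>) \<le> ereal s}"
      define J where "J = idx ` K"
      define M where "M = \<lceil>2*pi/\<delta>\<rceil>"
      have JM: "J \<subseteq> {0..M}"
      proof
        fix j assume "j \<in> J"
        then obtain \<tau> where \<tau>: "\<tau> \<in> {-pi<..pi}" "j = idx \<tau>" by (auto simp: J_def K_def)
        have "0 \<le> (\<tau> + pi)/\<delta> + 1/2" using \<tau> \<delta>0 by simp
        then have "0 \<le> j" using \<tau> by (simp add: idx_def)
        moreover have "(\<tau> + pi)/\<delta> + 1/2 < of_int M + 1"
        proof -
          have "(\<tau> + pi)/\<delta> \<le> 2*pi/\<delta>" using \<tau> \<delta>0 by (simp add: divide_right_mono)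
          also have "\<dots> \<le> of_int M" unfolding M_def by (rule le_of_int_ceiling)
          finally show ?thesis by simp
        qed
        then have "\<lfloor>(\<tau> + pi)/\<delta> + 1/2\<rfloor> \<le> M" by (simp add: floor_le_iff)
        then have "j \<le> M" using \<tau> unfolding idx_def by simp
        ultimately show "j \<in> {0..M}" by simp
      qed
      have finJ: "finite J" using JM finite_subset by blast
      have cardJ: "real (card J) \<le> of_int M + 1"
      proof -
        have "card J \<le> card {0..M}" using JM by (intro card_mono) auto
        also have "card {0..M} = nat (M + 1)" by simp
        finally have "card J \<le> nat (M + 1)" .
        moreover have "0 \<le> M"
        proof -
          have "0 \<le> 2*pi/\<delta>" using \<delta>0 by simp
          then show ?thesis unfolding M_def by linarith
        qed
        ultimately show ?thesis by linarith
      qed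
      define p where "p = (\<lambda>j. complex_of_real R' * cis (tj j))"
      have pn: "cmod (p j) = R'" for j using m8 by (simp only: p_def norm_mult norm_of_real norm_cis) (simp add: R'_def)
      have pne: "p j \<noteq> z" if "z \<in> cball 0 R" for j z
      proof
        assume "p j = z"
        then have "cmod z = R'" by (metis pn)
        moreover have "cmod z \<le> R" using that by simp
        ultimately show False using m0 by (simp add: R_def R'_def)
      qed
      define f where "f = (\<lambda>z. complex_of_real s + complex_of_real m * (\<Sum>j\<in>J. (p j + z)/(p j - z)))"
      define P where "P = (\<lambda>j z. (R'\<^sup>2 - (cmod z)\<^sup>2) / (cmod (p j - z))\<^sup>2)"
      have ReF: "Re (f z) = s + m * (\<Sum>j\<in>J. P j z)" if "z \<in> cball 0 R" for z
      proof -
        have "Re (f z) = s + m * (\<Sum>j\<in>J. Re ((p j + z)/(p j - z)))"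
          by (simp add: f_def Re_sum)
        also have "(\<Sum>j\<in>J. Re ((p j + z)/(p j - z))) = (\<Sum>j\<in>J. P j z)"
          using Re_poisson[OF pne[OF that]] pn by (intro sum.cong) (auto simp: P_def)
        finally show ?thesis .
      qed
      have Ppos: "0 \<le> P j z" if "z \<in> cball 0 R" for j z
      proof -
        have "cmod z \<le> R" using that by simp
        then have "(cmod z)\<^sup>2 \<le> R'\<^sup>2" using m0 by (intro power_mono) (auto simp: R_def R'_def)
        then show ?thesis by (simp add: P_def)
      qed
      have R0: "0 < R" and R1: "R < 1" using m0 m8 by (auto simp: R_def)
      have maj: "\<forall>w\<in>cball 0 R. u w \<le> ereal (Re (f w))"
      proof -
        have cb: "cball 0 R \<subseteq> unit_disc" using R1 by (auto simp: unit_disc_def)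
        have hol: "f holomorphic_on ball 0 R"
          unfolding f_def using pne by (auto intro!: holomorphic_intros)
        have con: "continuous_on (cball 0 R) f"
          unfolding f_def using pne by (auto intro!: continuous_intros)
        have sph: "\<forall>w\<in>sphere 0 R. u w \<le> ereal (Re (f w))"
        proof
          fix w :: complex assume w: "w \<in> sphere 0 R"
          then have wc: "w \<in> cball 0 R" by simp
          define \<tau> where "\<tau> = Arg w"
          have nw: "cmod w = R" using w by simp
          have wform: "w = complex_of_real R * cis \<tau>"
            using rcis_cmod_Arg[of w] unfolding rcis_def nw \<tau>_def by simp
          have \<tau>r: "\<tau> \<in> {-pi<..pi}" using Arg_bounded[of w] by (simp add: \<tau>_def)
          have wdisc: "w \<in> unit_disc" using nw R1 by (simp add: unit_disc_def)
          have sumnn: "0 \<le> (\<Sum>j\<in>J. P j w)" using Ppos[OF wc] by (intro sum_nonneg) auto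
          show "u w \<le> ereal (Re (f w))"
          proof (cases "u w \<le> ereal s")
            case True
            have "s \<le> Re (f w)" using ReF[OF wc] sumnn m0 by simp
            then have "ereal s \<le> ereal (Re (f w))" by simp
            with True show ?thesis by (rule order.trans)
          next
            case False
            then have \<tau>K: "\<tau> \<in> K" using \<tau>r wform by (simp add: K_def)
            define j where "j = idx \<tau>"
            have jJ: "j \<in> J" using \<tau>K by (simp add: J_def j_def)
            have tjt: "\<bar>tj j - \<tau>\<bar> \<le> \<delta>/2" using cell[of \<tau>] by (simp add: j_def)
            have eq: "p j - w = complex_of_real (R' - R) * cis (tj j) + complex_of_real R * (cis (tj j) - cis \<tau>)"
              by (simp add: p_def wform algebra_simps)
            have "cmod (p j - w) \<le> cmod (complex_of_real (R' - R) * cis (tj j)) + cmod (complex_of_real R * (cis (tj j) - cis \<tau>))"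
              unfolding eq by (rule norm_triangle_ineq)
            also have "cmod (complex_of_real (R' - R) * cis (tj j)) = m/4"
              using m0 by (simp only: norm_mult norm_of_real norm_cis) (simp add: R_def R'_def)
            also have "cmod (complex_of_real R * (cis (tj j) - cis \<tau>)) = R * cmod (cis (tj j) - cis \<tau>)"
              using R0 by (simp add: norm_mult)
            also have "R * cmod (cis (tj j) - cis \<tau>) \<le> 1 * \<bar>tj j - \<tau>\<bar>"
              using R0 R1 cmod_cis_diff_le[of "tj j" \<tau>] by (intro mult_mono) auto
            finally have dpw: "cmod (p j - w) \<le> m/2" using tjt by (simp add: \<delta>_def)
            define D where "D = (cmod (p j - w))\<^sup>2"
            have D0: "0 < D" using pne[OF wc, of j] by (simp add: D_def)
            have Dle: "D \<le> (m/2)\<^sup>2" unfolding D_def by (rule power_mono[OF dpw]) simp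
            have X: "3*m/8 \<le> R'\<^sup>2 - R\<^sup>2"
            proof -
              have "R'\<^sup>2 - R\<^sup>2 = (m/4) * (2 - 7*m/4)"
                by (simp add: R_def R'_def power2_eq_square algebra_simps)
              also have "(m/4) * (3/2) \<le> (m/4) * (2 - 7*m/4)"
                using m0 m8 by (intro mult_left_mono) auto
              finally show ?thesis by simp
            qed
            have "D \<le> m * (R'\<^sup>2 - R\<^sup>2)"
            proof -
              have "m * (3*m/8) \<le> m * (R'\<^sup>2 - R\<^sup>2)" using X m0 by (intro mult_left_mono) auto
              moreover have "(m/2)\<^sup>2 \<le> m * (3*m/8)" using m0 by (simp add: power2_eq_square)
              ultimately show ?thesis using Dle by linarith
            qed
            then have "1 \<le> m * (R'\<^sup>2 - R\<^sup>2) / D" using D0 by simp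
            also have "m * (R'\<^sup>2 - R\<^sup>2) / D = m * P j w" by (simp add: P_def D_def nw)
            also have "m * P j w \<le> m * (\<Sum>j\<in>J. P j w)"
              using m0 Ppos[OF wc] jJ finJ by (intro mult_left_mono member_le_sum) auto
            finally have "1 \<le> m * (\<Sum>j\<in>J. P j w)" .
            then have "1 \<le> Re (f w)" using ReF[OF wc] s0 by simp
            then have a: "ereal 1 \<le> ereal (Re (f w))" by simp
            have "u w \<le> 1" using ule wdisc by blast
            then have "u w \<le> ereal 1" by (simp add: one_ereal_def)
            from order.trans[OF this a] show ?thesis .
          qed
        qed
        show ?thesis using sh cb hol con sph R0 unfolding subharmonic_on_disc_def by blast
      qed
      have z0c: "z0 \<in> cball 0 R" using nz0 ms' m0 by (simp add: R_def)
      have bound: "Re (f z0) \<le> C * s"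
      proof -
        define \<rho> where "\<rho> = 1 - s"
        have \<rho>: "1/2 < \<rho>" "\<rho> < 1" using s0 sh2 by (auto simp: \<rho>_def)
        have R'b: "7/8 \<le> R'" "R' < 1" using m0 m8 by (auto simp: R'_def)
        have X0: "R'\<^sup>2 - (cmod z0)\<^sup>2 \<le> 2 * s"
        proof -
          have "R'\<^sup>2 - (cmod z0)\<^sup>2 = (R' - \<rho>) * (R' + \<rho>)"
            by (simp add: nz0 \<rho>_def power2_eq_square algebra_simps)
          also have "\<dots> \<le> s * 2"
          proof (rule mult_mono)
            show "R' - \<rho> \<le> s" using m0 by (simp add: R'_def \<rho>_def)
            show "R' + \<rho> \<le> 2" using R'b \<rho> by simp
            show "0 \<le> s" using s0 by simp
            show "0 \<le> R' + \<rho>" using R'b \<rho> by simp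
          qed
          finally show ?thesis by simp
        qed
        have Pnear: "P j z0 \<le> 8 / s" for j
        proof -
          have "cmod (p j) - cmod z0 \<le> cmod (p j - z0)" by (rule norm_triangle_ineq2)
          then have d1: "s/2 \<le> cmod (p j - z0)" using pn[of j] nz0 ms' s0 by (simp add: R'_def)
          define Dz where "Dz = (cmod (p j - z0))\<^sup>2"
          have D1: "(s/2)\<^sup>2 \<le> Dz" unfolding Dz_def by (rule power_mono[OF d1]) (use s0 in simp)
          have D0: "0 < (s/2)\<^sup>2" using s0 by simp
          have "P j z0 = (R'\<^sup>2 - (cmod z0)\<^sup>2) / Dz" by (simp add: P_def Dz_def)
          have Dzp: "0 < Dz" using D0 D1 by linarith
          have "P j z0 \<le> (2 * s) / Dz" unfolding \<open>P j z0 = (R'\<^sup>2 - (cmod z0)\<^sup>2) / Dz\<close> using X0 Dzp by (intro divide_right_mono) auto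
          also have "\<dots> \<le> (2 * s) / (s/2)\<^sup>2"
            using D1 s0 mult_pos_pos[OF Dzp D0] by (intro divide_left_mono) auto
          also have "\<dots> = 8 / s" using s0 by (simp add: power2_eq_square field_simps)
          finally show ?thesis .
        qed
        have Pfar: "P j z0 \<le> 4 * s / c\<eta>" if jJ: "j \<in> J" and far: "2*\<eta> \<le> \<bar>tj j\<bar>" for j
        proof -
          obtain \<tau> where \<tau>: "\<tau> \<in> {-pi<..pi}" "j = idx \<tau>" using jJ by (auto simp: J_def K_def)
          have tjt: "\<bar>tj j - \<tau>\<bar> \<le> \<delta>/2" using cell[of \<tau>] \<tau> by simp
          define x where "x = tj j - \<phi>"
          have x1: "\<eta> \<le> \<bar>x\<bar>" using far \<phi> by (simp add: x_def abs_if split: if_splits)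
          have "\<bar>tj j\<bar> \<le> pi + \<delta>/2" using tjt \<tau> by (simp add: abs_if split: if_splits)
          moreover have "\<delta>/2 \<le> pi - 2*\<eta>" using me m0 by (simp add: \<delta>_def)
          ultimately have x2: "\<bar>x\<bar> \<le> 2*pi - \<eta>" using \<phi> by (simp add: x_def abs_if split: if_splits)
          have "\<eta> \<le> pi" using assms(2) pi_gt_zero by linarith
          then have cx: "cos x \<le> cos \<eta>" using cos_le_far[OF assms(1) _ x1 x2] by blast
          define Dz where "Dz = (cmod (p j - z0))\<^sup>2"
          have "Dz = R'\<^sup>2 + \<rho>\<^sup>2 - 2*R'*\<rho>*cos x"
            unfolding Dz_def p_def z0_def x_def \<rho>_def by (rule cmod_rcis_diff_sq)
          also have "\<dots> = (R' - \<rho>)\<^sup>2 + 2*(R'*\<rho>)*(1 - cos x)"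
            by (simp add: power2_eq_square algebra_simps)
          finally have Deq: "Dz = (R' - \<rho>)\<^sup>2 + 2*(R'*\<rho>)*(1 - cos x)" .
          have "1/4 \<le> R'*\<rho>" using mult_mono[of "1/2" R' "1/2" \<rho>] R'b \<rho> by simp
          moreover have "c\<eta> \<le> 1 - cos x" using cx by (simp add: c\<eta>_def)
          ultimately have "(1/4) * c\<eta> \<le> (R'*\<rho>) * (1 - cos x)"
            using c\<eta> by (intro mult_mono) auto
          moreover have "Dz = (R' - \<rho>)\<^sup>2 + 2 * ((R'*\<rho>) * (1 - cos x))" using Deq by (simp add: mult.assoc)
          ultimately have D1: "c\<eta>/2 \<le> Dz" using zero_le_power2[of "R' - \<rho>"] by linarith
          have D0: "0 < c\<eta>/2" using c\<eta> by simp
          have "P j z0 = (R'\<^sup>2 - (cmod z0)\<^sup>2) / Dz" by (simp add: P_def Dz_def)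
          have Dzp: "0 < Dz" using D0 D1 by linarith
          have "P j z0 \<le> (2 * s) / Dz" unfolding \<open>P j z0 = (R'\<^sup>2 - (cmod z0)\<^sup>2) / Dz\<close> using X0 Dzp by (intro divide_right_mono) auto
          also have "\<dots> \<le> (2 * s) / (c\<eta>/2)"
            using D1 s0 mult_pos_pos[OF Dzp D0] by (intro divide_left_mono) auto
          also have "\<dots> = 4 * s / c\<eta>" by simp
          finally show ?thesis .
        qed
        define Jn where "Jn = {j \<in> J. \<bar>tj j\<bar> < 2*\<eta>}"
        have JnJ: "Jn \<subseteq> J" by (auto simp: Jn_def)
        have finJn: "finite Jn" using finJ JnJ finite_subset by blast
        have measJn: "\<delta> * real (card Jn) \<le> 10 * s\<^sup>2"
        proof -
          define cs where "cs = (\<lambda>j. {tj j - \<delta>/2 ..< tj j + \<delta>/2})"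
          have cs_iff: "\<tau> \<in> cs j \<longleftrightarrow> idx \<tau> = j" for \<tau> j using cell_iff by (simp add: cs_def)
          have csfm: "cs j \<in> fmeasurable lebesgue" for j
            unfolding cs_def by (rule bounded_set_imp_lmeasurable) auto
          have csm: "cs j \<in> sets lebesgue" for j using csfm[of j] by auto
          have csmeas: "measure lebesgue (cs j) = \<delta>" for j using \<delta>0 by (simp add: cs_def)
          have csfin: "emeasure lebesgue (cs j) \<noteq> \<infinity>" for j
            using fmeasurableD2[OF csfm[of j]] unfolding infinity_ennreal_def .
          define U where "U = (\<Union>j\<in>Jn. cs j)"
          have disj: "disjoint_family_on cs Jn"
            unfolding disjoint_family_on_def using cs_iff by auto
          have mU: "measure lebesgue U = \<delta> * real (card Jn)"
          proof -
            have "measure lebesgue U = (\<Sum>j\<in>Jn. measure lebesgue (cs j))"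
              unfolding U_def using csm csfin disj by (intro measure_finite_Union[OF finJn]) auto
            also have "\<dots> = \<delta> * real (card Jn)" by (simp add: csmeas)
            finally show ?thesis .
          qed
          have Um: "U \<in> sets lebesgue" unfolding U_def using finJn csm by auto
          define V where "V = {-2*\<eta>-\<delta><..<2*\<eta>+\<delta>}"
          have Vfm: "V \<in> fmeasurable lebesgue" unfolding V_def by (rule bounded_set_imp_lmeasurable) auto
          have VGfm: "V - G h0 \<in> fmeasurable lebesgue" by (rule fmeasurable_Diff[OF Vfm Gmeas])
          have Usub: "U \<subseteq> V - G h0"
          proof
            fix \<theta> assume "\<theta> \<in> U"
            then obtain j where j: "j \<in> Jn" "\<theta> \<in> cs j" by (auto simp: U_def)
            then have jJ: "j \<in> J" and tjn: "\<bar>tj j\<bar> < 2*\<eta>" by (auto simp: Jn_def)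
            have th: "tj j - \<delta>/2 \<le> \<theta>" "\<theta> < tj j + \<delta>/2" using j(2) by (auto simp: cs_def)
            have "\<theta> \<in> V" using th tjn \<delta>0 unfolding V_def abs_less_iff by auto
            moreover have "\<theta> \<notin> G h0"
            proof
              assume thG: "\<theta> \<in> G h0"
              from jJ obtain \<tau> where \<tau>: "\<tau> \<in> K" "j = idx \<tau>" by (auto simp: J_def)
              have "tj j - \<delta>/2 \<le> \<tau> \<and> \<tau> < tj j + \<delta>/2" using cell_iff \<tau>(2) by blast
              then have d: "\<bar>\<tau> - \<theta>\<bar> < 1 - R" using th \<delta>0 unfolding R_def \<delta>_def abs_less_iff by linarith
              have r: "1 - h0 < R" "R < 1" using mh m0 h0 by (auto simp: R_def)
              from thG have "\<forall>r \<tau>. 1 - h0 < r \<and> r < 1 \<and> \<bar>\<tau> - \<theta>\<bar> < 1 - r \<longrightarrow> u (complex_of_real r * cis \<tau>) < ereal s"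
                unfolding G_def mem_Collect_eq .
              then have "u (complex_of_real R * cis \<tau>) < ereal s" using r d by blast
              moreover have "\<not> u (complex_of_real R * cis \<tau>) \<le> ereal s" using \<tau>(1) by (simp add: K_def)
              ultimately show False by simp
            qed
            ultimately show "\<theta> \<in> V - G h0" by simp
          qed
          define W1 where "W1 = {-2*\<eta>-\<delta><..-2*\<eta>} \<union> {2*\<eta>..<2*\<eta>+\<delta>}"
          define W2 where "W2 = {-2*\<eta><..<2*\<eta>} - Bt"
          define W3 where "W3 = Bt - G h0"
          have W1fm: "W1 \<in> fmeasurable lebesgue" unfolding W1_def by (rule bounded_set_imp_lmeasurable) auto
          have Ifm2: "{-2*\<eta><..<2*\<eta>} \<in> fmeasurable lebesgue" by (rule bounded_set_imp_lmeasurable) auto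
          have W2fm: "W2 \<in> fmeasurable lebesgue" unfolding W2_def by (rule fmeasurable_Diff[OF Ifm2 Btm])
          have W3fm: "W3 \<in> fmeasurable lebesgue" unfolding W3_def by (rule fmeasurable_Diff[OF Btfm Gmeas])
          have Wfm: "W1 \<union> W2 \<union> W3 \<in> fmeasurable lebesgue" using W1fm W2fm W3fm by auto
          have Vsplit: "V - G h0 \<subseteq> W1 \<union> W2 \<union> W3" by (auto simp: V_def W1_def W2_def W3_def)
          have "\<delta> * real (card Jn) = measure lebesgue U" using mU by simp
          also have "\<dots> \<le> measure lebesgue (V - G h0)" by (rule measure_mono_fmeasurable[OF Usub Um VGfm])
          also have "\<dots> \<le> measure lebesgue (W1 \<union> W2 \<union> W3)"
            by (rule measure_mono_fmeasurable[OF Vsplit _ Wfm]) (use VGfm in auto)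
          also have "\<dots> \<le> measure lebesgue W1 + measure lebesgue W2 + measure lebesgue W3"
          proof -
            have "measure lebesgue (W1 \<union> W2 \<union> W3) \<le> measure lebesgue (W1 \<union> W2) + measure lebesgue W3"
              using W1fm W2fm W3fm by (intro measure_Un_le) auto
            moreover have "measure lebesgue (W1 \<union> W2) \<le> measure lebesgue W1 + measure lebesgue W2"
              using W1fm W2fm by (intro measure_Un_le) auto
            ultimately show ?thesis by linarith
          qed
          also have "\<dots> \<le> 10 * s\<^sup>2"
          proof -
            have "measure lebesgue W1 \<le> measure lebesgue {-2*\<eta>-\<delta><..-2*\<eta>} + measure lebesgue {2*\<eta>..<2*\<eta>+\<delta>}"
              unfolding W1_def by (intro measure_Un_le) auto
            also have "\<dots> = 2 * \<delta>" using \<delta>0 by simp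
            finally have w1: "measure lebesgue W1 \<le> 2 * \<delta>" .
            have Dfm: "circle_param \<gamma> - Bt \<in> fmeasurable lebesgue" by (rule fmeasurable_Diff[OF Gfm Btm])
            have "W2 \<subseteq> circle_param \<gamma> - Bt" using arc_in by (auto simp: W2_def)
            then have "measure lebesgue W2 \<le> measure lebesgue (circle_param \<gamma> - Bt)"
              using W2fm Dfm by (intro measure_mono_fmeasurable) auto
            also have "\<dots> = mes \<gamma> - mes B"
              unfolding mes_def Bt_def[symmetric]
              by (rule measure_Diff) (use fmeasurableD2[OF Gfm] Gm Btm Bt_sub in \<open>auto simp: infinity_ennreal_def\<close>)
            also have "\<dots> \<le> 2 * pi * s\<^sup>2"
            proof -
              have mg0: "0 < mes \<gamma>"
              proof (rule ccontr)
                assume "\<not> 0 < mes \<gamma>"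
                moreover have "0 \<le> mes \<gamma>" by (simp add: mes_def)
                ultimately have "mes \<gamma> = 0" by simp
                then have "1 - 1/N \<le> 0" using ratio by simp
                then show False using N1 by (simp add: field_simps)
              qed
              have "(1 - 1/N) * mes \<gamma> \<le> mes B" using ratio mg0 by (simp add: le_divide_eq)
              then have "mes \<gamma> - mes B \<le> mes \<gamma> * s\<^sup>2" using s2 by (simp add: algebra_simps)
              also have "\<dots> \<le> 2 * pi * s\<^sup>2" using mes\<gamma> by (intro mult_right_mono) auto
              finally show ?thesis .
            qed
            finally have w2: "measure lebesgue W2 \<le> 2 * pi * s\<^sup>2" .
            have w3: "measure lebesgue W3 \<le> s\<^sup>2" using BG by (simp add: W3_def)
            have "2 * pi * s\<^sup>2 \<le> 8 * s\<^sup>2" using pi_less_4 by (intro mult_right_mono) auto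
            moreover have "2 * \<delta> \<le> s\<^sup>2" using ms m0 unfolding \<delta>_def by linarith
            ultimately show ?thesis using w1 w2 w3 by linarith
          qed
          finally show ?thesis .
        qed
        have sumsplit: "(\<Sum>j\<in>J. P j z0) = (\<Sum>j\<in>J - Jn. P j z0) + (\<Sum>j\<in>Jn. P j z0)"
          by (rule sum.subset_diff[OF JnJ finJ])
        have far_sum: "m * (\<Sum>j\<in>J - Jn. P j z0) \<le> 68 * s / c\<eta>"
        proof -
          have "(\<Sum>j\<in>J - Jn. P j z0) \<le> real (card (J - Jn)) * (4 * s / c\<eta>)"
            using Pfar by (intro sum_bounded_above) (auto simp: Jn_def)
          also have "\<dots> \<le> (of_int M + 1) * (4 * s / c\<eta>)"
          proof (rule mult_right_mono)
            have "card (J - Jn) \<le> card J" using finJ by (intro card_mono) auto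
            then show "real (card (J - Jn)) \<le> of_int M + 1" using cardJ by linarith
            show "0 \<le> 4 * s / c\<eta>" using s0 c\<eta> by simp
          qed
          finally have a: "m * (\<Sum>j\<in>J - Jn. P j z0) \<le> m * ((of_int M + 1) * (4 * s / c\<eta>))"
            using m0 by (intro mult_left_mono) auto
          have "m * (of_int M + 1) \<le> 17"
          proof -
            have "of_int M \<le> 2*pi/\<delta> + 1" unfolding M_def by linarith
            then have "m * (of_int M + 1) \<le> m * (2*pi/\<delta> + 2)" using m0 by (intro mult_left_mono) auto
            also have "\<dots> = 4*pi + 2*m" using m0 by (simp add: \<delta>_def field_simps)
            finally show ?thesis using pi_less_4 m8 by linarith
          qed
          then have "m * ((of_int M + 1) * (4 * s / c\<eta>)) \<le> 17 * (4 * s / c\<eta>)"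
            using s0 c\<eta> by (simp only: mult.assoc[symmetric]) (intro mult_right_mono, auto)
          with a show ?thesis by simp
        qed
        have near_sum: "m * (\<Sum>j\<in>Jn. P j z0) \<le> 160 * s"
        proof -
          have "(\<Sum>j\<in>Jn. P j z0) \<le> real (card Jn) * (8 / s)"
            using Pnear by (intro sum_bounded_above) auto
          then have "m * (\<Sum>j\<in>Jn. P j z0) \<le> m * (real (card Jn) * (8 / s))"
            using m0 by (intro mult_left_mono) auto
          also have "\<dots> = 2 * (\<delta> * real (card Jn)) * (8 / s)" by (simp add: \<delta>_def)
          also have "\<dots> \<le> 2 * (10 * s\<^sup>2) * (8 / s)" using measJn s0 by (intro mult_right_mono) auto
          also have "\<dots> = 160 * s" using s0 by (simp add: power2_eq_square)
          finally show ?thesis .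
        qed
        have "Re (f z0) = s + m * (\<Sum>j\<in>J - Jn. P j z0) + m * (\<Sum>j\<in>Jn. P j z0)"
          using ReF[OF z0c] sumsplit by (simp add: algebra_simps)
        also have "\<dots> \<le> s + 68 * s / c\<eta> + 160 * s" using far_sum near_sum by linarith
        also have "\<dots> \<le> C * s"
        proof -
          have a: "68 * s / c\<eta> \<le> 100 * s / c\<eta>" using s0 c\<eta> by (intro divide_right_mono) auto
          have b: "C * s = 200 * s + 100 * s / c\<eta>" by (simp add: C_def algebra_simps)
          show ?thesis using a b s0 by linarith
        qed
        finally show ?thesis .
      qed
      have "u z0 \<le> ereal (Re (f z0))" using maj z0c by blast
      also have "\<dots> \<le> ereal (C * s)" using bound by simp
      finally show ?thesis .

    qed
    then show "u (complex_of_real (1 - 1 / sqrt N) * cis \<phi>) \<le> ereal (C / sqrt N)"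
      unfolding Cs z0_def s_def .
  qed
qed

end
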